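(* Let $d\ge2$, $\alpha\in(1,2)$, and let $\mu$ be a nondegenerate $\alpha$-stable distribution on $\mathbb{R}^d$ with no shift, spectral spherical measure $\lambda$, and characteristic exponent $|z|^\alpha V(u_z)$. For $z\in\mathbb{C}$ with $\Re z>0$ let $\varrho(z)=|z|^2/(2\Re z)$. Then $$0<\varrho_0:=\sup_{u\in\mathbb{S}^{d-1}}\varrho(V(u))<\frac{\lambda(\mathbb{S}^{d-1})}{1+\cos(\pi\alpha)}<\infty.$$ Moreover, for any $R>\varrho_0$, letting $V_*=R-V$, one has $\sup_{\mathbb{S}^{d-1}}|V_*|<R$.
   Context: Let $d\ge 2$, $\mathbb{S}^{d-1}$ the unit sphere, $u_z=z/|z|$. An $\alpha$-stable distribution ($\alpha\ne1$) with no shift has $\hat\mu(z)=\exp\{-|z|^\alpha V(u_z)\}$, $V(u)=\int_{\mathbb{S}^{d-1}}|\langle u,v\rangle|^\alpha[1-i\tan(\pi\alpha/2)\mathrm{sgn}\langle u,v\rangle]\lambda(dv)$, where $\lambda$ is a finite nonzero Borel measure on the sphere (the spectral spherical measure). Nondegenerate: the support of $\mu$ is not contained in a proper affine subspace (equivalently $\inf\Re V>0$). *)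

theory Defs
  imports "HOL-Probability.Probability"
begin

definition stabV :: "real \<Rightarrow> 'a::euclidean_space measure \<Rightarrow> 'a \<Rightarrow> complex" where
  "stabV \<alpha> lam u =
     (CLINT v|lam. complex_of_real (\<bar>u \<bullet> v\<bar> powr \<alpha>) *
        (1 - \<i> * complex_of_real (tan (pi * \<alpha> / 2) * sgn (u \<bullet> v))))"

definition rho :: "complex \<Rightarrow> real" where
  "rho z = (cmod z)\<^sup>2 / (2 * Re z)"

text \<open>Nondegeneracy: the support of mu is not contained in a proper affine subspace.
  Since affine subspaces of a finite-dimensional space are closed, this says that every
  proper affine subspace has mu-measure < 1.\<close>
definition nondegenerate :: "'a::euclidean_space measure \<Rightarrow> bool" where
  "nondegenerate \<mu> \<longleftrightarrow> (\<forall>A. affine A \<and> A \<noteq> UNIV \<longrightarrow> measure \<mu> A < 1)"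

end

theory Submission
  imports Defs
begin


lemma cont_param_integral:
  fixes h :: "'u::metric_space \<Rightarrow> 'v \<Rightarrow> real"
  assumes fm: "finite_measure M"
    and cont: "\<And>v. v \<in> space M \<Longrightarrow> continuous_on K (\<lambda>u. h u v)"
    and meas: "\<And>u. u \<in> K \<Longrightarrow> h u \<in> borel_measurable M"
    and bnd: "\<And>u v. u \<in> K \<Longrightarrow> v \<in> space M \<Longrightarrow> \<bar>h u v\<bar> \<le> C"
  shows "continuous_on K (\<lambda>u. integral\<^sup>L M (h u))"
proof (rule continuous_on_sequentiallyI)
  fix x a assume x: "\<forall>n. x n \<in> K" and a: "a \<in> K" and lim: "x \<longlonglongrightarrow> a"
  show "(\<lambda>n. integral\<^sup>L M (h (x n))) \<longlonglongrightarrow> integral\<^sup>L M (h a)"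
  proof (rule integral_dominated_convergence[where w="\<lambda>_. C"])
    show "h a \<in> borel_measurable M" using meas a .
    show "h (x i) \<in> borel_measurable M" for i using meas x by blast
    show "integrable M (\<lambda>_. C)" by (rule finite_measure.integrable_const[OF fm])
    show "AE v in M. (\<lambda>i. h (x i) v) \<longlonglongrightarrow> h a v"
    proof (rule AE_I2)
      fix v assume v: "v \<in> space M"
      show "(\<lambda>i. h (x i) v) \<longlonglongrightarrow> h a v"
        using continuous_on_tendsto_compose[OF cont[OF v] lim a] x by (simp add: o_def)
    qed
    show "AE v in M. norm (h (x i) v) \<le> C" for i
      using bnd x by (intro AE_I2) auto
  qed
qed

lemma pt_zero:
  fixes a :: real
  assumes "\<And>n::nat. cos (a / real (Suc n)) = 1"
  shows "a = 0"
proof (rule ccontr)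
  assume a0: "a \<noteq> 0"
  obtain n :: nat where n: "\<bar>a\<bar> / (2*pi) < real n" using reals_Archimedean2 by blast
  have "\<bar>a\<bar> < 2 * pi * real (Suc n)" using n pi_gt_zero by (simp add: field_simps) (smt (verit) pi_gt_zero)
  then have lt: "\<bar>a / real (Suc n)\<bar> < 2 * pi" by (simp add: field_simps)
  obtain k :: int where k: "a / real (Suc n) = real_of_int k * 2 * pi" using assms[of n] cos_one_2pi_int by blast
  have "\<bar>a / real (Suc n)\<bar> = \<bar>real_of_int k\<bar> * (2*pi)" using k pi_gt_zero by (simp add: abs_mult)
  then have "\<bar>real_of_int k\<bar> * (2*pi) < 1 * (2 * pi)" using lt by simp
  then have "\<bar>real_of_int k\<bar> < 1" using pi_gt_zero by (meson mult_less_cancel_right_pos zero_less_mult_iff zero_less_numeral)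
  then have "k = 0" by linarith
  then show False using k a0 by simp
qed



lemma max_compact:
  fixes f :: "'a::metric_space \<Rightarrow> real"
  assumes "compact S" "S \<noteq> {}" "continuous_on S f"
  obtains x where "x \<in> S" "(SUP y\<in>S. f y) = f x" "bdd_above (f ` S)" "\<And>y. y \<in> S \<Longrightarrow> f y \<le> f x"
proof -
  obtain x where x: "x \<in> S" "\<And>y. y \<in> S \<Longrightarrow> f y \<le> f x"
    using continuous_attains_sup[OF assms] by blast
  have "(SUP y\<in>S. f y) = f x" using x by (intro cSup_eq_maximum) auto
  moreover have "bdd_above (f ` S)" using x by (auto simp: bdd_above_def)
  ultimately show ?thesis using that x by blast
qed

lemma nondeg_line:
  fixes \<mu> :: "'a::euclidean_space measure"
  assumes P: "prob_space \<mu>" and sets: "sets \<mu> = sets borel" and nd: "nondegenerate \<mu>"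
    and w: "norm w = 1"
    and ch: "\<And>n::nat. (CLINT x|\<mu>. exp (\<i> * complex_of_real ((w /\<^sub>R real (Suc n)) \<bullet> x))) = 1"
  shows False
proof -
  interpret prob_space \<mu> by (rule P)
  have sp: "space \<mu> = UNIV" using sets_eq_imp_space_eq[OF sets] by simp
  have mb: "f \<in> borel_measurable \<mu>" if "f \<in> borel_measurable borel" for f :: "'a \<Rightarrow> real"
    using measurable_cong_sets[OF sets refl] that by blast
  have mbc: "f \<in> borel_measurable \<mu>" if "f \<in> borel_measurable borel" for f :: "'a \<Rightarrow> complex"
    using measurable_cong_sets[OF sets refl] that by blast
  have ae: "AE x in \<mu>. cos ((w \<bullet> x) / real (Suc n)) = 1" for n :: nat
  proof -
    let ?g = "\<lambda>x. 1 - cos ((w \<bullet> x) / real (Suc n))"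
    have gm: "?g \<in> borel_measurable \<mu>"
      by (rule mb, rule borel_measurable_continuous_onI) (intro continuous_intros; simp)
    have gi: "integrable \<mu> ?g"
      by (rule integrable_const_bound[where B=2, OF _ gm]) (auto intro!: AE_I2 simp: abs_le_iff)
    have cm: "(\<lambda>x. exp (\<i> * complex_of_real ((w /\<^sub>R real (Suc n)) \<bullet> x))) \<in> borel_measurable \<mu>"
      by (intro mbc borel_measurable_continuous_onI continuous_intros)
    have ci: "integrable \<mu> (\<lambda>x. exp (\<i> * complex_of_real ((w /\<^sub>R real (Suc n)) \<bullet> x)))"
      by (rule integrable_const_bound[where B=1, OF _ cm]) (auto intro!: AE_I2 simp: norm_exp)
    have "Re (CLINT x|\<mu>. exp (\<i> * complex_of_real ((w /\<^sub>R real (Suc n)) \<bullet> x))) = 1"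
      using ch[of n] by simp
    then have "(LINT x|\<mu>. Re (exp (\<i> * complex_of_real ((w /\<^sub>R real (Suc n)) \<bullet> x)))) = 1"
      using integral_Re[OF ci] by simp
    then have c1: "(LINT x|\<mu>. cos ((w \<bullet> x) / real (Suc n))) = 1"
    proof -
      have "Re (exp (\<i> * complex_of_real ((w /\<^sub>R real (Suc n)) \<bullet> x))) = cos ((w \<bullet> x) / real (Suc n))" for x
        by (simp add: Re_exp field_simps)
      then show ?thesis using \<open>(LINT x|\<mu>. Re (exp (\<i> * complex_of_real ((w /\<^sub>R real (Suc n)) \<bullet> x)))) = 1\<close> by simp
    qed
    have cosm: "(\<lambda>x. cos ((w \<bullet> x) / real (Suc n))) \<in> borel_measurable \<mu>"
      by (rule mb, rule borel_measurable_continuous_onI) (intro continuous_intros; simp)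
    have cint: "integrable \<mu> (\<lambda>x. cos ((w \<bullet> x) / real (Suc n)))"
      by (rule integrable_const_bound[where B=1, OF _ cosm]) (auto intro!: AE_I2)
    have "(LINT x|\<mu>. ?g x) = 0"
      using c1 cint prob_space by (simp add: integral_diff)
    then have "AE x in \<mu>. ?g x = 0"
      using integral_nonneg_eq_0_iff_AE[OF gi] by auto
    then show ?thesis by auto
  qed
  have "AE x in \<mu>. \<forall>n::nat. cos ((w \<bullet> x) / real (Suc n)) = 1"
    using ae by (simp add: AE_all_countable)
  then have ae0: "AE x in \<mu>. w \<bullet> x = 0"
    by (rule AE_mp) (auto intro!: AE_I2 pt_zero)
  define H where "H = {x. w \<bullet> x = 0}"
  have Hm: "H \<in> sets \<mu>" unfolding H_def sets
    by (intro borel_closed closed_hyperplane)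
  have "prob H = 1"
    using prob_Collect_eq_1[of "\<lambda>x. w \<bullet> x = 0"] Hm ae0 sp by (simp add: H_def)
  moreover have "affine H" unfolding H_def by (intro subspace_imp_affine subspace_hyperplane)
  moreover have "H \<noteq> UNIV"
  proof
    assume "H = UNIV" then have "w \<in> H" by simp then have "w \<bullet> w = 0" by (simp add: H_def)
    then show False using w by simp
  qed
  ultimately show False using nd unfolding nondegenerate_def by fastforce
qed



lemma powr_sgn_eq: "\<bar>x\<bar> powr a * sgn x = x * \<bar>x\<bar> powr (a - 1)" if "a > 0" for x a :: real
proof (cases "x = 0")
  case False
  have "\<bar>x\<bar> powr a = \<bar>x\<bar> * \<bar>x\<bar> powr (a - 1)"
    using powr_mult_base[of "\<bar>x\<bar>" "a - 1"] by simp
  then show ?thesis using False by (cases "x > 0") (auto simp: sgn_if)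
qed simp

lemma cont_p: "continuous_on UNIV (\<lambda>x::real. \<bar>x\<bar> powr a)" if "a > 0"
  using that by (intro continuous_on_powr' continuous_intros) auto

lemma cont_q: "continuous_on UNIV (\<lambda>x::real. x * \<bar>x\<bar> powr (a - 1))" if "a > 1"
  using that by (intro continuous_intros continuous_on_powr') auto

theorem lemma5p3:
  fixes \<mu> lam :: "'a::euclidean_space measure" and \<alpha> :: real
  assumes dim: "DIM('a) \<ge> 2"
    and alpha: "1 < \<alpha>" "\<alpha> < 2"
    and lam_sets: "sets lam = sets (restrict_space borel (sphere (0::'a) 1))"
    and lam_fin: "finite_measure lam"
    and lam_nz: "emeasure lam (space lam) \<noteq> 0"
    and mu_prob: "prob_space \<mu>"
    and mu_sets: "sets \<mu> = sets borel"
    and mu_char: "\<And>z::'a. (CLINT x|\<mu>. exp (\<i> * complex_of_real (z \<bullet> x)))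
                      = exp (- complex_of_real (norm z powr \<alpha>) * stabV \<alpha> lam (sgn z))"
    and nondeg: "nondegenerate \<mu>"
  shows "bdd_above ((\<lambda>u. rho (stabV \<alpha> lam u)) ` sphere 0 1)
       \<and> 0 < (SUP u\<in>sphere 0 1. rho (stabV \<alpha> lam u))
       \<and> (SUP u\<in>sphere 0 1. rho (stabV \<alpha> lam u)) < measure lam (space lam) / (1 + cos (pi * \<alpha>))
       \<and> (\<forall>R > (SUP u\<in>sphere 0 1. rho (stabV \<alpha> lam u)).
            bdd_above ((\<lambda>u. cmod (R - stabV \<alpha> lam u)) ` sphere 0 1)
            \<and> (SUP u\<in>sphere 0 1. cmod (R - stabV \<alpha> lam u)) < R)"
proof -
  interpret lam: finite_measure lam by (rule lam_fin)
  define S :: "'a set" where "S = sphere 0 1"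
  define t where "t = tan (pi * \<alpha> / 2)"
  define L where "L = measure lam (space lam)"
  define fA where "fA u = (LINT v|lam. \<bar>u \<bullet> v\<bar> powr \<alpha>)" for u :: 'a
  define fB where "fB u = (LINT v|lam. (u \<bullet> v) * \<bar>u \<bullet> v\<bar> powr (\<alpha> - 1))" for u :: 'a
  have spl: "space lam = S" using sets_eq_imp_space_eq[OF lam_sets] by (simp add: S_def)
  have measl: "f \<in> borel_measurable lam" if "f \<in> borel_measurable borel" for f :: "'a \<Rightarrow> 'b::topological_space"
    using measurable_cong_sets[OF lam_sets refl] measurable_restrict_space1[OF that] by blast
  have cp: "continuous_on UNIV (\<lambda>x::real. \<bar>x\<bar> powr \<alpha>)" using cont_p alpha by simp
  have cq: "continuous_on UNIV (\<lambda>x::real. x * \<bar>x\<bar> powr (\<alpha> - 1))" using cont_q alpha by simp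
  have pm: "(\<lambda>v. \<bar>u \<bullet> v\<bar> powr \<alpha>) \<in> borel_measurable lam" for u
    by (intro measl borel_measurable_continuous_onI continuous_on_compose2[OF cp]) (auto intro!: continuous_intros)
  have qm: "(\<lambda>v. (u \<bullet> v) * \<bar>u \<bullet> v\<bar> powr (\<alpha> - 1)) \<in> borel_measurable lam" for u
    by (intro measl borel_measurable_continuous_onI continuous_on_compose2[OF cq, of _ "\<lambda>v. u \<bullet> v"]) (auto intro!: continuous_intros)
  have ib: "\<bar>u \<bullet> v\<bar> \<le> 1" if "u \<in> S" "v \<in> S" for u v
    using Cauchy_Schwarz_ineq2[of u v] that by (simp add: S_def)
  have pb: "\<bar>u \<bullet> v\<bar> powr \<alpha> \<le> 1" if "u \<in> S" "v \<in> S" for u v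
    using powr_le1[of \<alpha> "\<bar>u \<bullet> v\<bar>"] ib[OF that] alpha by simp
  have qabs: "\<bar>(u \<bullet> v) * \<bar>u \<bullet> v\<bar> powr (\<alpha> - 1)\<bar> = \<bar>u \<bullet> v\<bar> powr \<alpha>" for u v
    using powr_mult_base[of "\<bar>u \<bullet> v\<bar>" "\<alpha> - 1"] by (simp add: abs_mult)
  have pint: "integrable lam (\<lambda>v. \<bar>u \<bullet> v\<bar> powr \<alpha>)" if "u \<in> S" for u
    by (rule lam.integrable_const_bound[where B=1, OF _ pm]) (use pb that spl in \<open>auto intro!: AE_I2\<close>)
  have qint: "integrable lam (\<lambda>v. (u \<bullet> v) * \<bar>u \<bullet> v\<bar> powr (\<alpha> - 1))" if "u \<in> S" for u
    by (rule lam.integrable_const_bound[where B=1, OF _ qm]) (use pb that spl in \<open>auto intro!: AE_I2 simp: qabs\<close>)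
  have V_eq: "stabV \<alpha> lam u = complex_of_real (fA u) - \<i> * complex_of_real t * complex_of_real (fB u)"
    if u: "u \<in> S" for u
  proof -
    have "stabV \<alpha> lam u = (CLINT v|lam. complex_of_real (\<bar>u \<bullet> v\<bar> powr \<alpha>) * (1 - \<i> * complex_of_real (t * sgn (u \<bullet> v))))"
      unfolding stabV_def t_def ..
    also have "\<dots> = (CLINT v|lam. complex_of_real (\<bar>u \<bullet> v\<bar> powr \<alpha>)
          - \<i> * complex_of_real t * complex_of_real ((u \<bullet> v) * \<bar>u \<bullet> v\<bar> powr (\<alpha> - 1)))"
    proof (rule Bochner_Integration.integral_cong[OF refl])
      fix v
      have e: "\<bar>u \<bullet> v\<bar> powr \<alpha> * sgn (u \<bullet> v) = (u \<bullet> v) * \<bar>u \<bullet> v\<bar> powr (\<alpha> - 1)"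
        using powr_sgn_eq alpha by simp
      show "complex_of_real (\<bar>u \<bullet> v\<bar> powr \<alpha>) * (1 - \<i> * complex_of_real (t * sgn (u \<bullet> v))) =
          complex_of_real (\<bar>u \<bullet> v\<bar> powr \<alpha>) - \<i> * complex_of_real t * complex_of_real ((u \<bullet> v) * \<bar>u \<bullet> v\<bar> powr (\<alpha> - 1))"
        unfolding e[symmetric] of_real_mult by (simp add: algebra_simps)
    qed
    also have "\<dots> = complex_of_real (fA u) - \<i> * complex_of_real t * complex_of_real (fB u)"
    proof -
      have i1: "complex_integrable lam (\<lambda>v. complex_of_real (\<bar>u \<bullet> v\<bar> powr \<alpha>))"
        using pint[OF u] by (rule integrable_of_real)
      have i2: "complex_integrable lam (\<lambda>v. \<i> * complex_of_real t * complex_of_real ((u \<bullet> v) * \<bar>u \<bullet> v\<bar> powr (\<alpha> - 1)))"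
        using qint[OF u] by (intro integrable_mult_right integrable_of_real)
      show ?thesis
        by (simp only: Bochner_Integration.integral_diff[OF i1 i2] integral_mult_right_zero integral_complex_of_real fA_def fB_def)
    qed
    finally show ?thesis .
  qed
  have Ann: "0 \<le> fA u" for u unfolding fA_def by (rule Bochner_Integration.integral_nonneg) auto
  have AleL: "fA u \<le> L" if "u \<in> S" for u
  proof -
    have "fA u \<le> (LINT v|lam. 1)" unfolding fA_def
      by (rule integral_mono[OF pint[OF that]]) (use pb that spl in auto)
    then show ?thesis by (simp add: L_def)
  qed
  have BleA: "\<bar>fB u\<bar> \<le> fA u" for u
  proof -
    have "\<bar>fB u\<bar> \<le> (LINT v|lam. \<bar>(u \<bullet> v) * \<bar>u \<bullet> v\<bar> powr (\<alpha> - 1)\<bar>)" unfolding fB_def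
      by (rule integral_abs_bound)
    also have "\<dots> = fA u" by (simp only: qabs fA_def)
    finally show ?thesis .
  qed
  have cA: "continuous_on S fA" unfolding fA_def
  proof (rule cont_param_integral[OF lam_fin, where C=1])
    show "continuous_on S (\<lambda>u. \<bar>u \<bullet> v\<bar> powr \<alpha>)" for v
      by (intro continuous_on_compose2[OF cp]) (auto intro!: continuous_intros)
    show "(\<lambda>v. \<bar>u \<bullet> v\<bar> powr \<alpha>) \<in> borel_measurable lam" for u by (rule pm)
    show "\<bar>\<bar>u \<bullet> v\<bar> powr \<alpha>\<bar> \<le> 1" if "u \<in> S" "v \<in> space lam" for u v
      using pb[of u v] that spl by simp
  qed
  have cB: "continuous_on S fB" unfolding fB_def
  proof (rule cont_param_integral[OF lam_fin, where C=1])
    show "continuous_on S (\<lambda>u. (u \<bullet> v) * \<bar>u \<bullet> v\<bar> powr (\<alpha> - 1))" for v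
      by (intro continuous_on_compose2[OF cq, of _ "\<lambda>u. u \<bullet> v"]) (auto intro!: continuous_intros)
    show "(\<lambda>v. (u \<bullet> v) * \<bar>u \<bullet> v\<bar> powr (\<alpha> - 1)) \<in> borel_measurable lam" for u by (rule qm)
    show "\<bar>(u \<bullet> v) * \<bar>u \<bullet> v\<bar> powr (\<alpha> - 1)\<bar> \<le> 1" if "u \<in> S" "v \<in> space lam" for u v
      using pb[of u v] that spl by (simp only: qabs)
  qed
  have Apos: "0 < fA w" if w: "w \<in> S" for w
  proof (rule ccontr)
    assume "\<not> 0 < fA w"
    then have A0: "fA w = 0" using Ann[of w] by simp
    then have B0: "fB w = 0" using BleA[of w] by simp
    have V0: "stabV \<alpha> lam w = 0" using V_eq[OF w] A0 B0 by simp
    have nw: "norm w = 1" using w by (simp add: S_def)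
    show False
    proof (rule nondeg_line[OF mu_prob mu_sets nondeg nw])
      fix n :: nat
      have "sgn (w /\<^sub>R real (Suc n)) = w"
        using nw by (simp add: sgn_scaleR sgn_div_norm)
      then show "(CLINT x|\<mu>. exp (\<i> * complex_of_real ((w /\<^sub>R real (Suc n)) \<bullet> x))) = 1"
        using mu_char[of "w /\<^sub>R real (Suc n)"] V0 by simp
    qed
  qed
  have AltL: "fA u < L" if u: "u \<in> S" for u
  proof (rule ccontr)
    assume "\<not> fA u < L"
    then have AL: "fA u = L" using AleL[OF u] by simp
    have gi: "integrable lam (\<lambda>v. 1 - \<bar>u \<bullet> v\<bar> powr \<alpha>)"
      using pint[OF u] by simp
    have "(LINT v|lam. 1 - \<bar>u \<bullet> v\<bar> powr \<alpha>) = L - fA u"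
      using pint[OF u] by (simp add: Bochner_Integration.integral_diff fA_def L_def)
    then have "(LINT v|lam. 1 - \<bar>u \<bullet> v\<bar> powr \<alpha>) = 0" using AL by simp
    then have "AE v in lam. 1 - \<bar>u \<bullet> v\<bar> powr \<alpha> = 0"
      using integral_nonneg_eq_0_iff_AE[OF gi] pb u spl by auto
    then have ae1: "AE v in lam. \<bar>u \<bullet> v\<bar> = 1"
    proof (rule AE_mp, intro AE_I2 impI)
      fix v assume v: "v \<in> space lam" and e: "1 - \<bar>u \<bullet> v\<bar> powr \<alpha> = 0"
      have le: "\<bar>u \<bullet> v\<bar> \<le> 1" using ib[OF u] v spl by simp
      show "\<bar>u \<bullet> v\<bar> = 1"
      proof (rule ccontr)
        assume "\<bar>u \<bullet> v\<bar> \<noteq> 1"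
        then have "\<bar>u \<bullet> v\<bar> < 1" using le by simp
        then have "\<bar>u \<bullet> v\<bar> powr \<alpha> < 1 powr \<alpha>" using alpha by (intro powr_less_mono2) auto
        then show False using e by simp
      qed
    qed
    obtain w0 where w0: "w0 \<noteq> 0" "orthogonal u w0" using orthogonal_to_vector_exists[OF dim] by blast
    define w where "w = sgn w0"
    have wS: "w \<in> S" using w0 by (simp add: w_def S_def norm_sgn)
    have uw: "u \<bullet> w = 0" using w0 by (simp add: w_def orthogonal_def sgn_div_norm)
    have "AE v in lam. \<bar>w \<bullet> v\<bar> powr \<alpha> = 0"
    proof (rule AE_mp[OF ae1], intro AE_I2 impI)
      fix v assume v: "v \<in> space lam" and e: "\<bar>u \<bullet> v\<bar> = 1"
      have nv: "norm v = 1" "norm u = 1" using v spl u by (auto simp: S_def)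
      have "v = u \<or> v = - u" using norm_cauchy_schwarz_abs_eq[of u v] e nv by simp
      then have "w \<bullet> v = 0" using uw by (auto simp: inner_commute)
      then show "\<bar>w \<bullet> v\<bar> powr \<alpha> = 0" by simp
    qed
    then have "fA w = (LINT v|lam. 0)" unfolding fA_def
      by (rule integral_cong_AE[OF pm, rotated]) simp
    then show False using Apos[OF wS] by simp
  qed
  define r where "r u = ((fA u)^2 + t^2 * (fB u)^2) / (2 * fA u)" for u
  have rho_eq: "rho (stabV \<alpha> lam u) = r u" if u: "u \<in> S" for u
    using V_eq[OF u] by (simp add: rho_def r_def cmod_power2 power_mult_distrib)
  have cr: "continuous_on S r" unfolding r_def
    using Apos by (intro continuous_intros cA cB) (simp add: less_imp_neq[symmetric] order.strict_iff_not)
  have Sne: "S \<noteq> {}" by (simp add: S_def)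
  have cS: "compact S" by (simp add: S_def)
  obtain u0 where u0: "u0 \<in> S" "(SUP y\<in>S. r y) = r u0" "bdd_above (r ` S)" "\<And>y. y \<in> S \<Longrightarrow> r y \<le> r u0"
    by (rule max_compact[OF cS Sne cr]) blast
  have img1: "(\<lambda>u. rho (stabV \<alpha> lam u)) ` sphere 0 1 = r ` S"
    using rho_eq unfolding S_def by (intro image_cong) auto
  have sup1: "(SUP u\<in>sphere 0 1. rho (stabV \<alpha> lam u)) = r u0"
    using img1 u0(2) by simp
  have A0: "0 < fA u0" using Apos[OF u0(1)] .
  have rpos: "0 < r u0" using A0 unfolding r_def by (intro divide_pos_pos add_pos_nonneg mult_nonneg_nonneg) auto
  have c0: "cos (pi * \<alpha> / 2) < 0" using alpha by (intro cos_lt_zero_pi) auto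
  have tsq: "1 + t^2 = 1 / (cos (pi * \<alpha> / 2))^2"
  proof -
    have cne: "cos (pi * \<alpha> / 2) \<noteq> 0" using c0 by simp
    show ?thesis
      using cne by (simp add: t_def tan_def power_divide sin_squared_eq field_simps)
  qed
  have cosd: "1 + cos (pi * \<alpha>) = 2 * (cos (pi * \<alpha> / 2))^2"
    using cos_double_cos[of "pi * \<alpha> / 2"] by simp
  have "r u0 \<le> fA u0 * (1 + t^2) / 2"
  proof -
    have "(fB u0)^2 \<le> (fA u0)^2" using BleA[of u0] by (metis abs_ge_zero power2_abs power_mono)
    then have "(fA u0)^2 + t^2 * (fB u0)^2 \<le> (fA u0)^2 + t^2 * (fA u0)^2"
      by (intro add_left_mono mult_left_mono) auto
    then show ?thesis using A0 by (simp add: r_def field_simps power2_eq_square)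
  qed
  also have "\<dots> < L * (1 + t^2) / 2"
    using AltL[OF u0(1)] by (intro divide_strict_right_mono mult_strict_right_mono) (auto intro: add_pos_nonneg)
  also have "\<dots> = L / (1 + cos (pi * \<alpha>))"
    using c0 by (simp add: tsq cosd field_simps)
  finally have bound: "r u0 < L / (1 + cos (pi * \<alpha>))" .
  have part4: "bdd_above ((\<lambda>u. cmod (R - stabV \<alpha> lam u)) ` sphere 0 1)
            \<and> (SUP u\<in>sphere 0 1. cmod (R - stabV \<alpha> lam u)) < R" if R: "R > r u0" for R :: real
  proof -
    define g where "g u = sqrt ((R - fA u)^2 + (t * fB u)^2)" for u
    have g_eq: "cmod (R - stabV \<alpha> lam u) = g u" if u: "u \<in> S" for u
      using V_eq[OF u] by (simp add: g_def cmod_def)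
    have cg: "continuous_on S g" unfolding g_def by (intro continuous_intros cA cB)
    obtain u1 where u1: "u1 \<in> S" "(SUP y\<in>S. g y) = g u1" "bdd_above (g ` S)" "\<And>y. y \<in> S \<Longrightarrow> g y \<le> g u1"
      by (rule max_compact[OF cS Sne cg]) blast
    have img2: "(\<lambda>u. cmod (R - stabV \<alpha> lam u)) ` sphere 0 1 = g ` S"
      using g_eq unfolding S_def by (intro image_cong) auto
    have A1: "0 < fA u1" using Apos[OF u1(1)] .
    have "r u1 < R" using u0(4)[OF u1(1)] R by simp
    then have "(fA u1)^2 + t^2 * (fB u1)^2 < R * (2 * fA u1)"
      using A1 by (simp add: r_def divide_less_eq)
    then have "(R - fA u1)^2 + (t * fB u1)^2 < R^2"
      by (simp add: power2_eq_square algebra_simps)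
    then have "g u1 < sqrt (R^2)" unfolding g_def by (intro real_sqrt_less_mono)
    also have "\<dots> = R" using R rpos by simp
    finally show ?thesis using img2 u1 by simp
  qed
  show ?thesis
    using img1 u0(3) sup1 rpos bound part4 by (simp add: L_def)
qed


end
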